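(* Let $I=(u..v)$ and $J=(c..d)$ be two conserved intervals of $\mathcal{P}$ with $u<c\leq v<d$. Then $(u..c)$, $(c..v)$, $(v..d)$ and $(u..d)$ are conserved intervals of $\mathcal{P}$.
   Context: Let $n\geq 2$ and let $\mathcal{P}=\{P_1,\ldots,P_K\}$ be signed permutations of $\{1,\ldots,n\}$: each $P_k$ is an ordering of $1,\ldots,n$ in which each element carries a sign $+$ or $-$. Assume $P_1=(+1,+2,\ldots,+n)$ and that every $P_k$ has first element $+1$ and last element $+n$. For integers $i\leq j$ write $(i..j)=\{i,\ldots,j\}$. A conserved interval of $\mathcal{P}$ is either a singleton, or a set $(a..c)$ with $a<c$ which (ignoring signs) occupies consecutive positions in every $P_k$ and which, in every $P_k$, has either $+a$ at its left end and $+c$ at its right end, or $-c$ at its left end and $-a$ at its right end. *)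

theory Defs
  imports Main
begin

text \<open>A signed permutation of {1..n} is a list of nonzero integers: entry +k / -k
  means element k with sign + / -. The absolute values enumerate 1..n exactly once.\<close>
definition signed_perm :: "nat \<Rightarrow> int list \<Rightarrow> bool" where
  "signed_perm n P \<longleftrightarrow> length P = n \<and> distinct (map abs P) \<and> 0 \<notin> set P
     \<and> abs ` set P = {1..int n}"

definition conserved_in :: "int list \<Rightarrow> int \<Rightarrow> int \<Rightarrow> bool" where
  "conserved_in P a c \<longleftrightarrow> (\<exists>i. i + nat (c - a) < length P
     \<and> abs ` set (take (nat (c - a) + 1) (drop i P)) = {a..c}
     \<and> ((P ! i = a \<and> P ! (i + nat (c - a)) = c) \<or>
        (P ! i = - c \<and> P ! (i + nat (c - a)) = - a)))"

definition conserved :: "nat \<Rightarrow> int list list \<Rightarrow> int \<Rightarrow> int \<Rightarrow> bool" where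
  "conserved n Ps a c \<longleftrightarrow> (a = c \<and> 1 \<le> a \<and> a \<le> int n)
     \<or> (a < c \<and> (\<forall>P\<in>set Ps. conserved_in P a c))"

end

theory Submission
  imports Defs
begin

lemma blk: "i + L < length P \<Longrightarrow>
  abs ` set (take (L+1) (drop i P)) = (\<lambda>p. abs (P!p)) ` {i..i+L}"
proof -
  assume h: "i + L < length P"
  have "set (take (L+1) (drop i P)) = (\<lambda>p. P!p) ` {i..i+L}"
  proof
    show "set (take (L+1) (drop i P)) \<subseteq> (\<lambda>p. P!p) ` {i..i+L}"
    proof
      fix x assume "x \<in> set (take (L+1) (drop i P))"
      then obtain k where k: "k < length (take (L+1) (drop i P))" "x = take (L+1) (drop i P) ! k"
        by (metis in_set_conv_nth)
      then have "x = P ! (i+k)" "k \<le> L" using h by auto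
      then show "x \<in> (\<lambda>p. P!p) ` {i..i+L}" by auto
    qed
  next
    show "(\<lambda>p. P!p) ` {i..i+L} \<subseteq> set (take (L+1) (drop i P))"
    proof
      fix x assume "x \<in> (\<lambda>p. P!p) ` {i..i+L}"
      then obtain p where p: "p \<in> {i..i+L}" "x = P!p" by auto
      define k where "k = p - i"
      have "take (L+1) (drop i P) ! k = x" "k < length (take (L+1) (drop i P))"
        using p h by (auto simp: k_def)
      then show "x \<in> set (take (L+1) (drop i P))" by (metis nth_mem)
    qed
  qed
  then show ?thesis by (simp add: image_image)
qed

lemma one:
  fixes P :: "int list" and u v c d :: int
  assumes dist: "distinct (map abs P)" and I: "conserved_in P u v" and J: "conserved_in P c d"
    and o: "u < c" "c \<le> v" "v < d"
  shows "conserved_in P u c \<and> conserved_in P c v \<and> conserved_in P v d \<and> conserved_in P u d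
     \<and> c \<in> abs ` set P"
proof -
  define g where "g = (\<lambda>p. abs (P!p))"
  have inj: "inj_on g {..<length P}" using dist unfolding g_def
    by (auto simp: inj_on_def distinct_conv_nth)
  have ci: "conserved_in P x y \<longleftrightarrow> (\<exists>i. i + nat(y-x) < length P \<and> g`{i..i+nat(y-x)} = {x..y}
     \<and> ((P!i = x \<and> P!(i+nat(y-x)) = y) \<or> (P!i = -y \<and> P!(i+nat(y-x)) = -x)))" for x y
    unfolding conserved_in_def g_def
    apply (rule ex_cong1)
    subgoal for i by (cases "i+nat(y-x) < length P") (simp_all add: blk[simplified])
    done
  obtain i where i: "i + nat(v-u) < length P" "g`{i..i+nat(v-u)} = {u..v}" and
     ie: "(P!i = u \<and> P!(i+nat(v-u)) = v) \<or> (P!i = -v \<and> P!(i+nat(v-u)) = -u)"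
    using I ci by blast
  obtain j where j: "j + nat(d-c) < length P" "g`{j..j+nat(d-c)} = {c..d}" and
     je: "(P!j = c \<and> P!(j+nat(d-c)) = d) \<or> (P!j = -d \<and> P!(j+nat(d-c)) = -c)"
    using J ci by blast
  define a where "a = nat (c-u)"
  define b where "b = nat (v-c)"
  define e where "e = nat (d-v)"
  have ar: "nat(v-u) = a+b" "nat(d-c) = b+e" "nat(d-u) = a+b+e" "nat(c-u) = a" "nat(v-c) = b"
     "nat(d-v) = e" "a > 0" "e > 0"
    using o by (auto simp: a_def b_def e_def)
  define A where "A = {i..i+a+b}"
  define B where "B = {j..j+b+e}"
  have iA: "g ` A = {u..v}" "i+a+b < length P" using i ar by (auto simp: A_def add.assoc)
  have jB: "g ` B = {c..d}" "j+b+e < length P" using j ar by (auto simp: B_def add.assoc)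
  have AN: "A \<subseteq> {..<length P}" using iA by (auto simp: A_def)
  have BN: "B \<subseteq> {..<length P}" using jB by (auto simp: B_def)
  have gnn: "g p \<ge> 0" for p by (simp add: g_def)
  have u0: "u \<ge> 0" using iA o gnn by (metis atLeastAtMost_iff imageE order_refl less_imp_le order.trans)
  have memA: "p \<in> A \<longleftrightarrow> g p \<in> {u..v}" if "p < length P" for p
  proof
    assume "g p \<in> {u..v}"
    then obtain q where "q \<in> A" "g q = g p" using iA by (metis imageE)
    then show "p \<in> A" using inj AN that by (metis inj_onD lessThan_iff subsetD)
  qed (use iA in auto)
  have memB: "p \<in> B \<longleftrightarrow> g p \<in> {c..d}" if "p < length P" for p
  proof
    assume "g p \<in> {c..d}"
    then obtain q where "q \<in> B" "g q = g p" using jB by (metis imageE)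
    then show "p \<in> B" using inj BN that by (metis inj_onD lessThan_iff subsetD)
  qed (use jB in auto)
  have cardAB: "card (A \<inter> B) = b + 1"
  proof -
    have "card (A \<inter> B) = card (g ` (A \<inter> B))"
      using inj AN by (metis card_image inj_on_subset le_infI1)
    also have "g ` (A \<inter> B) = g`A \<inter> g`B"
      by (rule inj_on_image_Int[OF inj AN BN])
    also have "\<dots> = {c..v}" using iA jB o by auto
    also have "card {c..v} = b + 1" using o ar by simp
    finally show ?thesis .
  qed
  have dif: "g ` (X - Y) = g ` X - g ` Y" if "X \<subseteq> A \<union> B" "Y \<subseteq> A \<union> B" for X Y
    by (rule inj_on_image_set_diff[OF inj]) (use that AN BN in blast)+
  have int: "g ` (A \<inter> B) = g`A \<inter> g`B" by (rule inj_on_image_Int[OF inj AN BN])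
  have cmem: "c \<in> abs ` set P"
  proof -
    have "c \<in> g ` B" using jB o by auto
    then obtain p where "p \<in> B" "c = g p" by auto
    then show ?thesis using BN unfolding g_def by auto
  qed
  have v0: "abs v = v" "abs u = u" "abs c = c" "abs d = d" using u0 o by auto
  have Li: "i < length P" "i+a+b < length P" using iA by auto
  have Lj: "j < length P" "j+b+e < length P" using jB by auto
  show ?thesis
  proof (cases "P!i = u \<and> P!(i+nat(v-u)) = v")
    case True
    then have Pi: "P!i = u" "P!(i+a+b) = v" using ar(1) by (simp_all add: add.assoc)
    have gi: "g i = u" "g (i+a+b) = v" using Pi v0 by (simp_all add: g_def)
    have "i+a+b \<in> B" using memB[OF Li(2)] gi o by simp
    moreover have "i \<notin> B" using memB[OF Li(1)] gi o by simp
    ultimately have ij: "i < j" "j \<le> i+a+b" unfolding B_def by auto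
    then have "j \<in> A" unfolding A_def by auto
    then have gjA: "g j \<in> {u..v}" using memA[OF Lj(1)] by simp
    have "P!j \<noteq> -d"
    proof
      assume "P!j = -d" then have "g j = d" using v0 by (simp add: g_def)
      then show False using gjA o by simp
    qed
    then have Pj: "P!j = c" "P!(j+b+e) = d" using je ar(2) by (simp_all add: add.assoc)
    have "g (j+b+e) = d" using Pj v0 by (simp add: g_def)
    then have "j+b+e \<notin> A" using memA[OF Lj(2)] o by simp
    then have "j+b+e > i+a+b" using ij unfolding A_def by auto
    then have "A \<inter> B = {j..i+a+b}" using ij unfolding A_def B_def by auto
    then have jj: "j = i + a" using cardAB ij by simp
    have s1: "{i..i+a} = (A - B) \<union> {j}" using jj ar(7) unfolding A_def B_def by auto
    have s2: "{i+a..i+a+b} = A \<inter> B" using jj unfolding A_def B_def by auto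
    have s3: "{i+a+b..i+a+b+e} = (B - A) \<union> {i+a+b}" using jj ar(8) unfolding A_def B_def by auto
    have s4: "{i..i+a+b+e} = A \<union> B" using jj unfolding A_def B_def by auto
    have gj: "g j = c" using Pj v0 by (simp add: g_def)
    have r1: "g ` {i..i+a} = {u..c}"
      unfolding s1 image_Un dif[of A B, OF Un_upper1 Un_upper2] iA jB using o gj by auto
    have r2: "g ` {i+a..i+a+b} = {c..v}" unfolding s2 int iA jB using o by auto
    have r3: "g ` {i+a+b..i+a+b+e} = {v..d}"
      unfolding s3 image_Un dif[of B A, OF Un_upper2 Un_upper1] iA jB using o gi by auto
    have r4: "g ` {i..i+a+b+e} = {u..d}" unfolding s4 image_Un iA jB using o by auto
    have L: "i+a+b+e < length P" using Lj jj by simp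
    have c1: "conserved_in P u c" unfolding ci ar(4)
      by (rule exI[of _ i]) (use r1 Pi Pj jj L in simp)
    have c2: "conserved_in P c v" unfolding ci ar(5)
      by (rule exI[of _ "i+a"]) (use r2 Pi Pj jj L in \<open>simp add: add.assoc\<close>)
    have c3: "conserved_in P v d" unfolding ci ar(6)
      by (rule exI[of _ "i+a+b"]) (use r3 Pi Pj jj L in \<open>simp add: add.assoc\<close>)
    have c4: "conserved_in P u d" unfolding ci ar(3)
      by (rule exI[of _ i]) (use r4 Pi Pj jj L in \<open>simp add: add.assoc\<close>)
    show ?thesis using c1 c2 c3 c4 cmem by blast
  next
    case False
    then have "P!i = -v \<and> P!(i+nat(v-u)) = -u" using ie by blast
    then have Pi: "P!i = -v" "P!(i+a+b) = -u" using ar(1) by (simp_all add: add.assoc)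
    have gi: "g i = v" "g (i+a+b) = u" using Pi v0 by (simp_all add: g_def)
    have iB: "i \<in> B" using memB[OF Li(1)] gi o by simp
    moreover have "i+a+b \<notin> B" using memB[OF Li(2)] gi o by simp
    ultimately have ij: "j \<le> i" "j+b+e < i+a+b" unfolding B_def by auto
    then have "j+b+e \<in> A" using iB unfolding A_def B_def by auto
    then have gjA: "g (j+b+e) \<in> {u..v}" using memA[OF Lj(2)] by simp
    have "P!(j+b+e) \<noteq> d"
    proof
      assume "P!(j+b+e) = d" then have "g (j+b+e) = d" using v0 by (simp add: g_def)
      then show False using gjA o by simp
    qed
    then have Pj: "P!j = -d" "P!(j+b+e) = -c" using je ar(2) by (simp_all add: add.assoc)
    have "A \<inter> B = {i..j+b+e}" using ij iB unfolding A_def B_def by auto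
    then have jj: "i = j + e" using cardAB ij iB unfolding B_def by auto
    have s1: "{j+b+e..j+b+e+a} = (A - B) \<union> {j+b+e}" using jj ar(7) unfolding A_def B_def by auto
    have s2: "{j+e..j+e+b} = A \<inter> B" using jj unfolding A_def B_def by auto
    have s3: "{j..j+e} = (B - A) \<union> {j+e}" using jj ar(8) unfolding A_def B_def by auto
    have s4: "{j..j+e+a+b} = A \<union> B" using jj unfolding A_def B_def by auto
    have gj: "g (j+b+e) = c" using Pj v0 by (simp add: g_def)
    have gi': "g (j+e) = v" using gi jj by simp
    have r1: "g ` {j+b+e..j+b+e+a} = {u..c}"
      unfolding s1 image_Un dif[of A B, OF Un_upper1 Un_upper2] iA jB using o gj by auto
    have r2: "g ` {j+e..j+e+b} = {c..v}" unfolding s2 int iA jB using o by auto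
    have r3: "g ` {j..j+e} = {v..d}"
      unfolding s3 image_Un dif[of B A, OF Un_upper2 Un_upper1] iA jB using o gi' by auto
    have r4: "g ` {j..j+e+a+b} = {u..d}" unfolding s4 image_Un iA jB using o by auto
    have L: "j+e+a+b < length P" using Li jj by simp
    have Pi': "P!(j+e) = -v" "P!(j+e+a+b) = -u" using Pi jj by simp_all
    have c1: "conserved_in P u c" unfolding ci ar(4)
      by (rule exI[of _ "j+b+e"]) (use r1 Pi' Pj L in \<open>simp add: ac_simps\<close>)
    have c2: "conserved_in P c v" unfolding ci ar(5)
      by (rule exI[of _ "j+e"]) (use r2 Pi' Pj L in \<open>simp add: ac_simps\<close>)
    have c3: "conserved_in P v d" unfolding ci ar(6)
      by (rule exI[of _ "j"]) (use r3 Pi' Pj L in \<open>simp add: ac_simps\<close>)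
    have c4: "conserved_in P u d" unfolding ci ar(3)
      by (rule exI[of _ j]) (use r4 Pi' Pj L in \<open>simp add: ac_simps\<close>)
    show ?thesis using c1 c2 c3 c4 cmem by blast
  qed
qed

theorem lemma5:
  fixes n :: nat and Ps :: "int list list" and u v c d :: int
  assumes "n \<ge> 2"
    and "Ps \<noteq> []"
    and "\<forall>P\<in>set Ps. signed_perm n P"
    and "hd Ps = [1..int n]"
    and "\<forall>P\<in>set Ps. hd P = 1 \<and> last P = int n"
    and "conserved n Ps u v" and "conserved n Ps c d"
    and "u < c" and "c \<le> v" and "v < d"
  shows "conserved n Ps u c \<and> conserved n Ps c v \<and> conserved n Ps v d \<and> conserved n Ps u d"
proof -
  have uc: "u < v" "c < d" using assms(8,9,10) by auto
  have K: "conserved_in P u c \<and> conserved_in P c v \<and> conserved_in P v d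
     \<and> conserved_in P u d \<and> c \<in> abs ` set P" if P: "P \<in> set Ps" for P
  proof -
    have I: "conserved_in P u v" using assms(6) uc P unfolding conserved_def by auto
    have J: "conserved_in P c d" using assms(7) uc P unfolding conserved_def by auto
    have "distinct (map abs P)" using assms(3) P unfolding signed_perm_def by blast
    then show ?thesis using one[OF _ I J assms(8,9,10)] by blast
  qed
  have h: "hd Ps \<in> set Ps" using assms(2) by simp
  then have "c \<in> abs ` set (hd Ps)" using K by blast
  moreover have "abs ` set (hd Ps) = {1..int n}" using assms(3) h unfolding signed_perm_def by blast
  ultimately have cn: "1 \<le> c \<and> c \<le> int n" by auto
  have "conserved n Ps c v"
  proof (cases "c = v")
    case True then show ?thesis using cn unfolding conserved_def by simp
  next
    case False then show ?thesis using K assms(9) unfolding conserved_def by auto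
  qed
  moreover have "conserved n Ps u c" using K assms(8) unfolding conserved_def by auto
  moreover have "conserved n Ps v d" using K assms(10) unfolding conserved_def by auto
  moreover have "conserved n Ps u d" using K assms(8,9,10) unfolding conserved_def by auto
  ultimately show ?thesis by blast
qed

end
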